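(* Every welded knot diagram can be transformed into a diagram of the trivial knot by a finite sequence of diagonal moves (together with classical and welded Reidemeister moves).
   Context: A welded knot diagram is a knot diagram that may have welded (virtual) crossings as well as classical crossings; welded knots are equivalence classes of welded knot diagrams under the three classical Reidemeister moves and the welded Reidemeister moves (the virtual Reidemeister moves together with the over-forbidden-type move allowing a strand passing over to slide past a welded crossing). A diagonal move (D-move) is a local move on a diagram defined as follows. Consider a disk in which the diagram consists of four arcs $a,b,c,d$ arranged in a "$\#$" pattern: $a$ and $c$ do not meet each other, $b$ and $d$ do not meet each other, and each of $a,c$ crosses each of $b,d$ exactly once in a classical crossing, giving four crossings labelled $1,2,3,4$ in cyclic order around the central square. The pairs $\{1,3\}$ and $\{2,4\}$ are the diagonal crossing pairs. A diagonal move changes the over/under information at both crossings of one diagonal pair and leaves the rest of the diagram unchanged; it is allowed for every choice of orientations of the arcs. *)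

theory Defs
  imports Main
begin

text \<open>
A welded (or virtual) knot diagram is encoded by its Gauss word: the cyclic
sequence of classical crossings met when travelling once along the oriented
knot.  Each letter records the crossing label, whether the strand passes over
(True) or under (False) at that point, and the sign of the crossing
(True = positive).  Welded crossings are invisible in the Gauss word; the
virtual Reidemeister moves are therefore built in.  The cyclic nature is
modelled by the rotation move; renaming crossings by the relabelling move.
\<close>

datatype letter = Ltr (lbl: nat) (ovr: bool) (pos: bool)

definition gauss_word :: "letter list \<Rightarrow> bool" where
  "gauss_word w \<longleftrightarrow> distinct w
     \<and> (\<forall>c s. Ltr c True s \<in> set w \<longleftrightarrow> Ltr c False s \<in> set w)
     \<and> (\<forall>c s t. Ltr c True s \<in> set w \<longrightarrow> Ltr c True t \<in> set w \<longrightarrow> s = t)"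

definition labels :: "letter list \<Rightarrow> nat set" where
  "labels w = lbl ` set w"

fun interleave :: "'a list list \<Rightarrow> 'a list list \<Rightarrow> 'a list" where
  "interleave [] ss = concat ss"
| "interleave (g # gs) [] = g @ concat gs"
| "interleave (g # gs) (s # ss) = g @ s @ interleave gs ss"

text \<open>Local replacement: the word w contains the segments olds (in some order,
pairwise disjoint, separated by arbitrary gaps), and w' arises by replacing each
old segment by the corresponding new one.\<close>
definition replace_segs :: "'a list list \<Rightarrow> 'a list list \<Rightarrow> 'a list \<Rightarrow> 'a list \<Rightarrow> bool" where
  "replace_segs olds news w w' \<longleftrightarrow> length news = length olds \<and>
     (\<exists>gs \<pi>. length gs = Suc (length olds) \<and> distinct \<pi> \<and> set \<pi> = {..<length olds}
        \<and> w = interleave gs (map ((!) olds) \<pi>) \<and> w' = interleave gs (map ((!) news) \<pi>))"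

definition sgn_of :: "bool \<Rightarrow> int" where
  "sgn_of b = (if b then 1 else -1)"

definition ord2 :: "bool \<Rightarrow> 'a \<Rightarrow> 'a \<Rightarrow> 'a list" where
  "ord2 e x y = (if e then [x, y] else [y, x])"

text \<open>Crossing sign = orient * det(over direction, under direction).\<close>
definition sprod3 :: "bool \<Rightarrow> bool \<Rightarrow> bool \<Rightarrow> bool" where
  "sprod3 orient x y \<longleftrightarrow> sgn_of orient * sgn_of x * sgn_of y = 1"

definition sprod4 :: "bool \<Rightarrow> bool \<Rightarrow> bool \<Rightarrow> bool \<Rightarrow> bool" where
  "sprod4 orient x y z \<longleftrightarrow> sgn_of orient * sgn_of x * sgn_of y * sgn_of z = 1"

definition r1_move :: "letter list \<Rightarrow> letter list \<Rightarrow> bool" where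
  "r1_move w w' \<longleftrightarrow> (\<exists>c s. c \<notin> labels w \<and>
     (replace_segs [[]] [[Ltr c True s, Ltr c False s]] w w'
      \<or> replace_segs [[]] [[Ltr c False s, Ltr c True s]] w w'))"

definition r2_move :: "letter list \<Rightarrow> letter list \<Rightarrow> bool" where
  "r2_move w w' \<longleftrightarrow> (\<exists>c d s. c \<noteq> d \<and> c \<notin> labels w \<and> d \<notin> labels w \<and>
     (replace_segs [[], []] [[Ltr c True s, Ltr d True (\<not> s)], [Ltr c False s, Ltr d False (\<not> s)]] w w'
      \<or> replace_segs [[], []] [[Ltr c True s, Ltr d True (\<not> s)], [Ltr d False (\<not> s), Ltr c False s]] w w'))"

text \<open>R3: top strand T, middle M, bottom B; a = T/M, b = T/B, c = M/B.
eT: a before b on T; eM: a before c on M; eB: b before c on B;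
orient: orientation of the triangle a b c.\<close>
definition r3_segs :: "nat \<Rightarrow> nat \<Rightarrow> nat \<Rightarrow> bool \<Rightarrow> bool \<Rightarrow> bool \<Rightarrow> bool \<Rightarrow> letter list list" where
  "r3_segs a b c orient eT eM eB =
    (let sa = sprod3 orient eT eM; sb = sprod3 orient eT eB; sc = sprod3 orient eM eB in
     [ord2 eT (Ltr a True sa) (Ltr b True sb),
      ord2 eM (Ltr a False sa) (Ltr c True sc),
      ord2 eB (Ltr b False sb) (Ltr c False sc)])"

definition r3_move :: "letter list \<Rightarrow> letter list \<Rightarrow> bool" where
  "r3_move w w' \<longleftrightarrow> (\<exists>a b c orient eT eM eB. distinct [a, b, c] \<and>
     replace_segs (r3_segs a b c orient eT eM eB) (r3_segs a b c orient (\<not> eT) (\<not> eM) (\<not> eB)) w w')"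

definition oc_move :: "letter list \<Rightarrow> letter list \<Rightarrow> bool" where
  "oc_move w w' \<longleftrightarrow> (\<exists>x y c s d t. w = x @ [Ltr c True s, Ltr d True t] @ y
                                   \<and> w' = x @ [Ltr d True t, Ltr c True s] @ y)"

definition rot_move :: "letter list \<Rightarrow> letter list \<Rightarrow> bool" where
  "rot_move w w' \<longleftrightarrow> w' = rotate1 w"

definition relabel_move :: "letter list \<Rightarrow> letter list \<Rightarrow> bool" where
  "relabel_move w w' \<longleftrightarrow> (\<exists>f. inj_on f (labels w) \<and>
     w' = map (\<lambda>l. Ltr (f (lbl l)) (ovr l) (pos l)) w)"

definition welded_step :: "letter list \<Rightarrow> letter list \<Rightarrow> bool" where
  "welded_step w w' \<longleftrightarrow> gauss_word w \<and> gauss_word w' \<and>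
     (r1_move w w' \<or> r2_move w w' \<or> r3_move w w' \<or> oc_move w w' \<or> rot_move w w' \<or> relabel_move w w')"

text \<open>The '#' tangle: horizontal arcs a (bottom, y=0) and c (top, y=1),
vertical arcs b (right, x=1) and d (left, x=0); crossings 1 = a/b at (1,0),
2 = c/b at (1,1), 3 = c/d at (0,1), 4 = a/d at (0,0), cyclic around the square.
ea, ec: horizontal arc oriented in +x; eb, ed: vertical arc oriented in +y.
hk: at crossing k the horizontal arc is the over strand.
orient: global orientation of the disk (sign convention).\<close>
definition hash_segs :: "nat \<Rightarrow> nat \<Rightarrow> nat \<Rightarrow> nat \<Rightarrow> bool \<Rightarrow> bool \<Rightarrow> bool \<Rightarrow> bool \<Rightarrow> bool
                         \<Rightarrow> bool \<Rightarrow> bool \<Rightarrow> bool \<Rightarrow> bool \<Rightarrow> letter list list" where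
  "hash_segs n1 n2 n3 n4 orient ea eb ec ed h1 h2 h3 h4 =
    (let s1 = sprod4 orient ea eb h1; s2 = sprod4 orient ec eb h2;
         s3 = sprod4 orient ec ed h3; s4 = sprod4 orient ea ed h4 in
     [ord2 ea (Ltr n4 h4 s4) (Ltr n1 h1 s1),
      ord2 eb (Ltr n1 (\<not> h1) s1) (Ltr n2 (\<not> h2) s2),
      ord2 ec (Ltr n3 h3 s3) (Ltr n2 h2 s2),
      ord2 ed (Ltr n4 (\<not> h4) s4) (Ltr n3 (\<not> h3) s3)])"

definition d_move :: "letter list \<Rightarrow> letter list \<Rightarrow> bool" where
  "d_move w w' \<longleftrightarrow> gauss_word w \<and> gauss_word w' \<and>
    (\<exists>n1 n2 n3 n4 orient ea eb ec ed h1 h2 h3 h4. distinct [n1, n2, n3, n4] \<and>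
      (replace_segs (hash_segs n1 n2 n3 n4 orient ea eb ec ed h1 h2 h3 h4)
                    (hash_segs n1 n2 n3 n4 orient ea eb ec ed (\<not> h1) h2 (\<not> h3) h4) w w'
     \<or> replace_segs (hash_segs n1 n2 n3 n4 orient ea eb ec ed h1 h2 h3 h4)
                    (hash_segs n1 n2 n3 n4 orient ea eb ec ed h1 (\<not> h2) h3 (\<not> h4)) w w'))"

definition wd_step :: "letter list \<Rightarrow> letter list \<Rightarrow> bool" where
  "wd_step u v \<longleftrightarrow> welded_step u v \<or> welded_step v u \<or> d_move u v \<or> d_move v u"

end

theory Submission imports Defs begin

definition GS :: "letter set \<Rightarrow> bool" where
  "GS S \<longleftrightarrow> (\<forall>c s. Ltr c True s \<in> S \<longleftrightarrow> Ltr c False s \<in> S)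
     \<and> (\<forall>c s t. Ltr c True s \<in> S \<longrightarrow> Ltr c True t \<in> S \<longrightarrow> s = t)"

lemma gw_char: "gauss_word w \<longleftrightarrow> distinct w \<and> GS (set w)"
  by (simp add: gauss_word_def GS_def)

lemma GS_insert: "GS S \<Longrightarrow> n \<notin> lbl ` S \<Longrightarrow> GS (S \<union> {Ltr n True s, Ltr n False s})"
  unfolding GS_def by (auto simp: image_iff)

definition flipset :: "nat set \<Rightarrow> letter \<Rightarrow> letter" where
  "flipset L l = (if lbl l \<in> L then Ltr (lbl l) (\<not> ovr l) (\<not> pos l) else l)"

lemma flipset_invol[simp]: "flipset L (flipset L l) = l"
  by (cases l) (auto simp: flipset_def)

lemma flipset_lbl[simp]: "lbl (flipset L l) = lbl l"
  by (simp add: flipset_def)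

lemma inj_flipset: "inj (flipset L)"
  by (metis flipset_invol injI)

lemma GS_flip: "GS S \<Longrightarrow> GS (flipset L ` S)"
proof -
  assume g: "GS S"
  have mem: "Ltr c b s \<in> flipset L ` S \<longleftrightarrow> (if c \<in> L then Ltr c (\<not>b) (\<not>s) \<in> S else Ltr c b s \<in> S)" for c b s
  proof -
    have "Ltr c b s \<in> flipset L ` S \<longleftrightarrow> flipset L (Ltr c b s) \<in> S"
      by (metis flipset_invol image_iff)
    then show ?thesis by (simp add: flipset_def)
  qed
  show ?thesis using g unfolding GS_def mem by (auto; metis (full_types))
qed

lemma gw_flip: "gauss_word w \<Longrightarrow> gauss_word (map (flipset L) w)"
  by (simp add: gw_char GS_flip distinct_map) (metis inj_flipset inj_on_subset subset_UNIV)

lemma GS_remove: "GS S \<Longrightarrow> GS (S - {l. lbl l = c})"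
  unfolding GS_def by (simp; blast)

lemma gw_same: "gauss_word w \<Longrightarrow> l1 \<in> set w \<Longrightarrow> l2 \<in> set w \<Longrightarrow> lbl l1 = lbl l2 \<Longrightarrow> ovr l1 = ovr l2 \<Longrightarrow> l1 = l2"
  unfolding gauss_word_def
  apply (cases l1; cases l2)
  apply simp
  by (metis (full_types))

lemma gw_partner: "gauss_word w \<Longrightarrow> Ltr c h s \<in> set w \<Longrightarrow> Ltr c (\<not>h) s \<in> set w"
  unfolding gauss_word_def by (cases h) auto

lemma gw_others: assumes "gauss_word w" "w = u @ X # v @ Y # x" "lbl X = c" "lbl Y = c"
  shows "\<forall>l \<in> set u \<union> set v \<union> set x. lbl l \<noteq> c"
proof (intro ballI notI)
  fix l assume l: "l \<in> set u \<union> set v \<union> set x" "lbl l = c"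
  have d: "distinct w" using assms(1) gauss_word_def by blast
  have "X \<noteq> Y" "l \<noteq> X" "l \<noteq> Y" using d l assms(2) by auto
  moreover have "l \<in> set w" "X \<in> set w" "Y \<in> set w" using l assms(2) by auto
  ultimately show False using gw_same[OF assms(1)] l assms(3,4) by (metis (full_types))
qed

lemma wd_sym: "wd_step u v = wd_step v u"
  unfolding wd_step_def by auto

lemma wd_rsym: "wd_step\<^sup>*\<^sup>* a b \<Longrightarrow> wd_step\<^sup>*\<^sup>* b a"
  by (induction rule: rtranclp_induct) (auto, metis converse_rtranclp_into_rtranclp wd_sym)

lemma wd_gw: "wd_step\<^sup>*\<^sup>* a b \<Longrightarrow> gauss_word a \<Longrightarrow> gauss_word b"
  by (induction rule: rtranclp_induct) (auto simp: wd_step_def welded_step_def d_move_def)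

lemma fresh_notin: "\<forall>l\<in>set w. lbl l < N \<Longrightarrow> N \<le> m \<Longrightarrow> Ltr m b s \<notin> set w"
  by force

lemma buildup:
  fixes N :: nat
  assumes gw: "gauss_word (u @ A # v @ B # x)"
    and fr: "\<forall>l\<in>set (u @ A # v @ B # x). lbl l < N"
  shows "wd_step\<^sup>*\<^sup>* (u @ A # v @ B # x)
    ([Ltr N True sA, Ltr (N+4) b r, Ltr (N+4) (\<not>b) r, Ltr (N+2) True sB, Ltr (N+3) True (\<not>sB), Ltr (N+1) True (\<not>sA)]
     @ u @ [Ltr (N+1) False (\<not>sA), Ltr N False sA] @ A # v @ B # [Ltr (N+2) False sB, Ltr (N+3) False (\<not>sB)] @ x)"
proof -
  define W0 where "W0 = u @ A # v @ B # x"
  define W1 where "W1 = [Ltr N True sA, Ltr (N+1) True (\<not>sA)]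
     @ u @ [Ltr (N+1) False (\<not>sA), Ltr N False sA] @ A # v @ B # x"
  define W2 where "W2 = [Ltr N True sA, Ltr (N+2) True sB, Ltr (N+3) True (\<not>sB), Ltr (N+1) True (\<not>sA)]
     @ u @ [Ltr (N+1) False (\<not>sA), Ltr N False sA] @ A # v @ B # [Ltr (N+2) False sB, Ltr (N+3) False (\<not>sB)] @ x"
  define W3 where "W3 = [Ltr N True sA, Ltr (N+4) b r, Ltr (N+4) (\<not>b) r, Ltr (N+2) True sB, Ltr (N+3) True (\<not>sB), Ltr (N+1) True (\<not>sA)]
     @ u @ [Ltr (N+1) False (\<not>sA), Ltr N False sA] @ A # v @ B # [Ltr (N+2) False sB, Ltr (N+3) False (\<not>sB)] @ x"
  have fu: "\<forall>l\<in>set u. lbl l < N" "\<forall>l\<in>set v. lbl l < N" "\<forall>l\<in>set x. lbl l < N" "lbl A < N" "lbl B < N"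
    using fr by auto
  have nu: "\<And>m b s. N \<le> m \<Longrightarrow> Ltr m b s \<notin> set u" "\<And>m b s. N \<le> m \<Longrightarrow> Ltr m b s \<notin> set v"
     "\<And>m b s. N \<le> m \<Longrightarrow> Ltr m b s \<notin> set x"
    using fresh_notin fu by blast+
  have nA: "\<And>m b s. N \<le> m \<Longrightarrow> Ltr m b s \<noteq> A" "\<And>m b s. N \<le> m \<Longrightarrow> Ltr m b s \<noteq> B"
    using fu by auto
  have nA': "\<And>m b s. N \<le> m \<Longrightarrow> A \<noteq> Ltr m b s" "\<And>m b s. N \<le> m \<Longrightarrow> B \<noteq> Ltr m b s"
    using fu by auto
  have g0: "distinct W0" "GS (set W0)" using gw W0_def gw_char by auto
  have L0: "\<And>m. N \<le> m \<Longrightarrow> m \<notin> lbl ` set W0" using fr W0_def by fastforce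
  have "GS (set W0 \<union> {Ltr N True sA, Ltr N False sA})"
    by (rule GS_insert[OF g0(2) L0]) simp
  then have gs1: "GS (set W0 \<union> {Ltr N True sA, Ltr N False sA} \<union> {Ltr (N+1) True (\<not>sA), Ltr (N+1) False (\<not>sA)})"
    by (rule GS_insert) (use L0 in auto)
  have set1: "set W1 = set W0 \<union> {Ltr N True sA, Ltr N False sA} \<union> {Ltr (N+1) True (\<not>sA), Ltr (N+1) False (\<not>sA)}"
    unfolding W0_def W1_def by auto
  have "distinct W1" using g0(1) unfolding W1_def W0_def by (simp add: nu nA nA')
  then have gw1: "gauss_word W1" unfolding gw_char using set1 gs1 by simp
  have st1: "wd_step W0 W1"
  proof -
    have "r2_move W0 W1" unfolding r2_move_def labels_def
      apply (rule exI[of _ N], rule exI[of _ "N+1"], rule exI[of _ sA])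
      apply (intro conjI)
      apply simp
      apply (simp add: L0)
      apply (simp add: L0)
      apply (rule disjI2)
      unfolding replace_segs_def
      apply (rule conjI, simp)
      apply (rule exI[of _ "[[], u, A # v @ B # x]"], rule exI[of _ "[0,1]"])
      by (auto simp: W0_def W1_def)
    then show ?thesis unfolding wd_step_def welded_step_def using gw gw1 W0_def by auto
  qed
  have set2: "set W2 = set W1 \<union> {Ltr (N+2) True sB, Ltr (N+2) False sB} \<union> {Ltr (N+3) True (\<not>sB), Ltr (N+3) False (\<not>sB)}"
    unfolding W2_def W1_def by auto
  have L1: "\<And>m. N+2 \<le> m \<Longrightarrow> m \<notin> lbl ` set W1" unfolding set1 using L0 by auto
  have "GS (set W1)" using gw1 gw_char by auto
  then have "GS (set W1 \<union> {Ltr (N+2) True sB, Ltr (N+2) False sB})"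
    by (rule GS_insert) (use L1 in auto)
  then have gs2: "GS (set W1 \<union> {Ltr (N+2) True sB, Ltr (N+2) False sB} \<union> {Ltr (N+3) True (\<not>sB), Ltr (N+3) False (\<not>sB)})"
    by (rule GS_insert) (use L1 in auto)
  have "distinct W2" using g0(1) unfolding W2_def W0_def by (simp add: nu nA nA')
  then have gw2: "gauss_word W2" unfolding gw_char using set2 gs2 by simp
  have st2: "wd_step W1 W2"
  proof -
    have "r2_move W1 W2" unfolding r2_move_def labels_def
      apply (rule exI[of _ "N+2"], rule exI[of _ "N+3"], rule exI[of _ sB])
      apply (intro conjI)
      apply simp
      apply (simp add: L1)
      apply (simp add: L1)
      apply (rule disjI1)
      unfolding replace_segs_def
      apply (rule conjI, simp)
      apply (rule exI[of _ "[[Ltr N True sA], Ltr (N+1) True (\<not>sA) # u @ [Ltr (N+1) False (\<not>sA), Ltr N False sA] @ A # v @ [B], x]"], rule exI[of _ "[0,1]"])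
      by (simp_all add: W2_def W1_def lessThan_Suc insert_commute)
    then show ?thesis unfolding wd_step_def welded_step_def using gw1 gw2 by auto
  qed
  have set3: "set W3 = set W2 \<union> {Ltr (N+4) True r, Ltr (N+4) False r}"
    unfolding W2_def W3_def by (cases b) auto
  have L2: "\<And>m. N+4 \<le> m \<Longrightarrow> m \<notin> lbl ` set W2" unfolding set2 using L1 by auto
  have "GS (set W2)" using gw2 gw_char by auto
  then have gs3: "GS (set W2 \<union> {Ltr (N+4) True r, Ltr (N+4) False r})"
    by (rule GS_insert) (use L2 in auto)
  have "distinct W3" using g0(1) unfolding W3_def W0_def by (cases b) (simp_all add: nu nA nA')
  then have gw3: "gauss_word W3" unfolding gw_char using set3 gs3 by simp
  have st3: "wd_step W2 W3"
  proof -
    have "r1_move W2 W3" unfolding r1_move_def labels_def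
      apply (rule exI[of _ "N+4"], rule exI[of _ r])
      apply (intro conjI)
      apply (simp add: L2)
      unfolding replace_segs_def
      apply (cases b)
      apply (rule disjI1)
      apply (rule conjI, simp)
      apply (rule exI[of _ "[[Ltr N True sA], Ltr (N+2) True sB # Ltr (N+3) True (\<not>sB) # Ltr (N+1) True (\<not>sA) # u @ [Ltr (N+1) False (\<not>sA), Ltr N False sA] @ A # v @ B # [Ltr (N+2) False sB, Ltr (N+3) False (\<not>sB)] @ x]"], rule exI[of _ "[0]"])
      apply (simp add: W2_def W3_def lessThan_Suc)
      apply (rule disjI2)
      apply (rule conjI, simp)
      apply (rule exI[of _ "[[Ltr N True sA], Ltr (N+2) True sB # Ltr (N+3) True (\<not>sB) # Ltr (N+1) True (\<not>sA) # u @ [Ltr (N+1) False (\<not>sA), Ltr N False sA] @ A # v @ B # [Ltr (N+2) False sB, Ltr (N+3) False (\<not>sB)] @ x]"], rule exI[of _ "[0]"])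
      apply (simp add: W2_def W3_def lessThan_Suc)
      done
    then show ?thesis unfolding wd_step_def welded_step_def using gw2 gw3 by auto
  qed
  have "wd_step\<^sup>*\<^sup>* W0 W3" using st1 st2 st3 by (metis r_into_rtranclp rtranclp_trans)
  then show ?thesis unfolding W0_def W3_def .
qed


lemma sprod4_TT: "sprod4 ori True True h = (ori = h)"
  by (simp add: sprod4_def sgn_of_def)

lemma dstep:
  fixes N c :: nat and h \<sigma> :: bool
  assumes g1: "gauss_word ([Ltr N True (\<not>(h = \<sigma>)), Ltr (N+4) True (\<not>(h = \<sigma>)), Ltr (N+4) False (\<not>(h = \<sigma>)), Ltr (N+2) True (h = \<sigma>), Ltr (N+3) True (\<not>(h = \<sigma>)), Ltr (N+1) True (\<not>\<not>(h = \<sigma>))]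
     @ u @ [Ltr (N+1) False (\<not>\<not>(h = \<sigma>)), Ltr N False (\<not>(h = \<sigma>))] @ Ltr c h \<sigma> # v @ Ltr c (\<not>h) \<sigma> # [Ltr (N+2) False (h = \<sigma>), Ltr (N+3) False (\<not>(h = \<sigma>))] @ x)"
    (is "gauss_word ?W")
  and g2: "gauss_word ([Ltr N True (\<not>(h = \<sigma>)), Ltr (N+4) False (h = \<sigma>), Ltr (N+4) (\<not>False) (h = \<sigma>), Ltr (N+2) True (h = \<sigma>), Ltr (N+3) True (\<not>(h = \<sigma>)), Ltr (N+1) True (\<not>\<not>(h = \<sigma>))]
     @ u @ [Ltr (N+1) False (\<not>\<not>(h = \<sigma>)), Ltr N False (\<not>(h = \<sigma>))] @ Ltr c (\<not>h) (\<not>\<sigma>) # v @ Ltr c h (\<not>\<sigma>) # [Ltr (N+2) False (h = \<sigma>), Ltr (N+3) False (\<not>(h = \<sigma>))] @ x)"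
    (is "gauss_word ?W'")
  and cN: "c < N"
  shows "d_move ?W ?W'"
  unfolding d_move_def
  apply (intro conjI g1 g2)
  apply (rule exI[of _ c], rule exI[of _ "N+2"], rule exI[of _ "N+4"], rule exI[of _ N], rule exI[of _ "h = \<sigma>"])
  apply (rule exI[of _ True], rule exI[of _ True], rule exI[of _ True], rule exI[of _ True])
  apply (rule exI[of _ h], rule exI[of _ True], rule exI[of _ False], rule exI[of _ False])
  apply (rule conjI)
  using cN apply simp
  apply (rule disjI1)
  unfolding replace_segs_def
  apply (rule conjI)
  apply (simp add: hash_segs_def Let_def)
  apply (rule exI[of _ "[[], [], [Ltr (N+3) True (\<not>(h = \<sigma>)), Ltr (N+1) True (\<not>\<not>(h = \<sigma>))] @ u @ [Ltr (N+1) False (\<not>\<not>(h = \<sigma>))], v, [Ltr (N+3) False (\<not>(h = \<sigma>))] @ x]"])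
  apply (rule exI[of _ "[3,2,0,1]"])
  apply (simp add: hash_segs_def Let_def ord2_def sprod4_TT lessThan_Suc insert_commute)
  unfolding o_def by auto


lemma lbl_bound: "\<forall>l\<in>set w. lbl l < Suc (sum_list (map lbl w))"
  by (simp add: less_Suc_eq_le member_le_sum_list)

lemma flip_one:
  assumes gw: "gauss_word (u @ Ltr c h \<sigma> # v @ Ltr c (\<not>h) \<sigma> # x)"
  shows "wd_step\<^sup>*\<^sup>* (u @ Ltr c h \<sigma> # v @ Ltr c (\<not>h) \<sigma> # x) (u @ Ltr c (\<not>h) (\<not>\<sigma>) # v @ Ltr c h (\<not>\<sigma>) # x)"
proof -
  define W0 where "W0 = u @ Ltr c h \<sigma> # v @ Ltr c (\<not>h) \<sigma> # x"
  define N where "N = Suc (sum_list (map lbl W0))"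
  have fr: "\<forall>l\<in>set W0. lbl l < N" unfolding N_def by (rule lbl_bound)
  have oth: "\<forall>l \<in> set u \<union> set v \<union> set x. lbl l \<noteq> c"
    using gw_others[OF gw, of u "Ltr c h \<sigma>" v "Ltr c (\<not>h) \<sigma>" x c] by simp
  have mapid: "map (flipset {c}) y = y" if "\<forall>l\<in>set y. lbl l \<noteq> c" for y
    using that by (induction y) (auto simp: flipset_def)
  have W0': "map (flipset {c}) W0 = u @ Ltr c (\<not>h) (\<not>\<sigma>) # v @ Ltr c h (\<not>\<sigma>) # x"
    unfolding W0_def using oth by (simp add: mapid flipset_def)
  have gw': "gauss_word (u @ Ltr c (\<not>h) (\<not>\<sigma>) # v @ Ltr c h (\<not>\<sigma>) # x)"
    using gw_flip[OF gw, of "{c}"] W0' W0_def by simp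
  have fr': "\<forall>l\<in>set (u @ Ltr c (\<not>h) (\<not>\<sigma>) # v @ Ltr c h (\<not>\<sigma>) # x). lbl l < N"
    using fr unfolding W0_def by auto
  have cN: "c < N" using fr unfolding W0_def by auto
  have b1: "wd_step\<^sup>*\<^sup>* W0 ([Ltr N True (\<not>(h = \<sigma>)), Ltr (N+4) True (\<not>(h = \<sigma>)), Ltr (N+4) False (\<not>(h = \<sigma>)), Ltr (N+2) True (h = \<sigma>), Ltr (N+3) True (\<not>(h = \<sigma>)), Ltr (N+1) True (\<not>\<not>(h = \<sigma>))]
     @ u @ [Ltr (N+1) False (\<not>\<not>(h = \<sigma>)), Ltr N False (\<not>(h = \<sigma>))] @ Ltr c h \<sigma> # v @ Ltr c (\<not>h) \<sigma> # [Ltr (N+2) False (h = \<sigma>), Ltr (N+3) False (\<not>(h = \<sigma>))] @ x)"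
    (is "wd_step\<^sup>*\<^sup>* W0 ?X1")
    using buildup[OF gw fr[unfolded W0_def], where sA = "\<not>(h=\<sigma>)" and b = True and r = "\<not>(h=\<sigma>)" and sB = "h=\<sigma>"]
    unfolding W0_def by simp
  have b2: "wd_step\<^sup>*\<^sup>* (u @ Ltr c (\<not>h) (\<not>\<sigma>) # v @ Ltr c h (\<not>\<sigma>) # x) ([Ltr N True (\<not>(h = \<sigma>)), Ltr (N+4) False (h = \<sigma>), Ltr (N+4) (\<not>False) (h = \<sigma>), Ltr (N+2) True (h = \<sigma>), Ltr (N+3) True (\<not>(h = \<sigma>)), Ltr (N+1) True (\<not>\<not>(h = \<sigma>))]
     @ u @ [Ltr (N+1) False (\<not>\<not>(h = \<sigma>)), Ltr N False (\<not>(h = \<sigma>))] @ Ltr c (\<not>h) (\<not>\<sigma>) # v @ Ltr c h (\<not>\<sigma>) # [Ltr (N+2) False (h = \<sigma>), Ltr (N+3) False (\<not>(h = \<sigma>))] @ x)"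
    (is "wd_step\<^sup>*\<^sup>* _ ?X2")
    using buildup[OF gw' fr', where sA = "\<not>(h=\<sigma>)" and b = False and r = "h=\<sigma>" and sB = "h=\<sigma>"]
    by simp
  have g1: "gauss_word ?X1" using wd_gw[OF b1] gw W0_def by simp
  have g2: "gauss_word ?X2" using wd_gw[OF b2 gw'] .
  have "d_move ?X1 ?X2" by (rule dstep[OF g1 g2 cN])
  then have "wd_step ?X1 ?X2" unfolding wd_step_def by simp
  then have "wd_step\<^sup>*\<^sup>* W0 ?X2" using b1 by (rule rtranclp.rtrancl_into_rtrancl[rotated])
  then show ?thesis using wd_rsym[OF b2] unfolding W0_def by (rule rtranclp_trans)
qed


lemma mapid: "\<forall>l\<in>set y. lbl l \<notin> L \<Longrightarrow> map (flipset L) y = y"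
  by (induction y) (auto simp: flipset_def)

lemma gw_pair:
  assumes gw: "gauss_word (u @ X # v @ Y # x)" and "lbl X = c" "lbl Y = c"
  shows "\<exists>h \<sigma>. X = Ltr c h \<sigma> \<and> Y = Ltr c (\<not>h) \<sigma>"
proof -
  obtain h \<sigma> where X: "X = Ltr c h \<sigma>" using assms(2) letter.collapse by metis
  have XY: "X \<noteq> Y" using gw unfolding gauss_word_def by auto
  have P: "Ltr c (\<not>h) \<sigma> \<in> set (u @ X # v @ Y # x)" using gw_partner[OF gw, of c h \<sigma>] X by simp
  have "ovr Y \<noteq> h"
  proof
    assume "ovr Y = h"
    then have "X = Y" using gw_same[OF gw, of X Y] X assms by simp
    then show False using XY by simp
  qed
  then have "Y = Ltr c (\<not>h) \<sigma>" using gw_same[OF gw P, of Y] assms by simp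
  then show ?thesis using X by blast
qed

lemma flip_one':
  assumes gw: "gauss_word (u @ X # v @ Y # x)" and "lbl X = c" "lbl Y = c"
  shows "wd_step\<^sup>*\<^sup>* (u @ X # v @ Y # x) (map (flipset {c}) (u @ X # v @ Y # x))"
proof -
  obtain h \<sigma> where X: "X = Ltr c h \<sigma>" and Y: "Y = Ltr c (\<not>h) \<sigma>" using gw_pair[OF assms] by blast
  have oth: "\<forall>l \<in> set u \<union> set v \<union> set x. lbl l \<notin> {c}"
    using gw_others[OF gw refl assms(2,3)] by simp
  have "map (flipset {c}) (u @ X # v @ Y # x) = u @ Ltr c (\<not>h) (\<not>\<sigma>) # v @ Ltr c h (\<not>\<sigma>) # x"
    using oth mapid[of u "{c}"] mapid[of v "{c}"] mapid[of x "{c}"] by (simp add: X Y flipset_def)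
  then show ?thesis using flip_one[of u c h \<sigma> v x] gw X Y by simp
qed

lemma flip_label:
  assumes gw: "gauss_word w"
  shows "wd_step\<^sup>*\<^sup>* w (map (flipset {c}) w)"
proof (cases "\<exists>l\<in>set w. lbl l = c")
  case False
  then show ?thesis using mapid[of w "{c}"] by simp
next
  case True
  then obtain l where l: "l \<in> set w" "lbl l = c" by blast
  obtain h \<sigma> where lh: "l = Ltr c h \<sigma>" using l(2) letter.collapse by metis
  have P: "Ltr c (\<not>h) \<sigma> \<in> set w" using gw_partner[OF gw] l lh by simp
  obtain p q where w: "w = p @ l # q" using split_list[OF l(1)] by blast
  have "Ltr c (\<not>h) \<sigma> \<in> set p \<or> Ltr c (\<not>h) \<sigma> \<in> set q" using P w lh by auto
  then show ?thesis
  proof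
    assume "Ltr c (\<not>h) \<sigma> \<in> set q"
    then obtain v x where "q = v @ Ltr c (\<not>h) \<sigma> # x" using split_list by metis
    then show ?thesis using flip_one'[of p l v "Ltr c (\<not>h) \<sigma>" x c] gw w l by simp
  next
    assume "Ltr c (\<not>h) \<sigma> \<in> set p"
    then obtain u v where "p = u @ Ltr c (\<not>h) \<sigma> # v" using split_list by metis
    then show ?thesis using flip_one'[of u "Ltr c (\<not>h) \<sigma>" v l q c] gw w l by simp
  qed
qed

lemma flipset_insert: "c \<notin> L \<Longrightarrow> flipset {c} (flipset L l) = flipset (insert c L) l"
  by (cases l) (auto simp: flipset_def)

lemma flip_set:
  assumes "finite L" "gauss_word w"
  shows "wd_step\<^sup>*\<^sup>* w (map (flipset L) w)"
  using assms(1)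
proof (induction L rule: finite_induct)
  case empty
  have "map (flipset {}) w = w" by (rule mapid) simp
  then show ?case by simp
next
  case (insert c L)
  have g: "gauss_word (map (flipset L) w)" using gw_flip[OF assms(2)] .
  have "wd_step\<^sup>*\<^sup>* (map (flipset L) w) (map (flipset {c}) (map (flipset L) w))"
    by (rule flip_label[OF g])
  also have "map (flipset {c}) (map (flipset L) w) = map (flipset (insert c L)) w"
    using insert(2) by (simp add: flipset_insert)
  finally show ?case using insert(3) by (rule rtranclp_trans[rotated])
qed


lemma oc_slide:
  assumes "gauss_word (p @ t # z @ q)" "ovr t" "\<forall>l\<in>set z. ovr l"
  shows "wd_step\<^sup>*\<^sup>* (p @ t # z @ q) (p @ z @ t # q)"
  using assms
proof (induction z arbitrary: p)
  case Nil
  then show ?case by simp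
next
  case (Cons y z)
  have gw2: "gauss_word ((p @ [y]) @ t # z @ q)"
    using Cons(2) unfolding gauss_word_def by auto
  have oc: "oc_move (p @ t # (y # z) @ q) ((p @ [y]) @ t # z @ q)"
    unfolding oc_move_def
    apply (rule exI[of _ p], rule exI[of _ "z @ q"], rule exI[of _ "lbl t"], rule exI[of _ "pos t"],
           rule exI[of _ "lbl y"], rule exI[of _ "pos y"])
    using Cons(3,4) by (cases t; cases y) auto
  have "wd_step (p @ t # (y # z) @ q) ((p @ [y]) @ t # z @ q)"
    unfolding wd_step_def welded_step_def using oc Cons(2) gw2 by simp
  moreover have "wd_step\<^sup>*\<^sup>* ((p @ [y]) @ t # z @ q) ((p @ [y]) @ z @ t # q)"
    using Cons.IH[OF gw2 Cons(3)] Cons(4) by simp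
  ultimately show ?case by (simp add: converse_rtranclp_into_rtranclp)
qed

lemma min_dec:
  "w = u @ X # z @ Y # x \<Longrightarrow> lbl X = lbl Y \<Longrightarrow>
   \<exists>u X z Y x. w = u @ X # z @ Y # x \<and> lbl X = lbl Y \<and> (\<forall>l1\<in>set z. \<forall>l2\<in>set z. lbl l1 = lbl l2 \<longrightarrow> l1 = l2)"
proof (induction "length z" arbitrary: u X z Y x rule: less_induct)
  case less
  show ?case
  proof (cases "\<forall>l1\<in>set z. \<forall>l2\<in>set z. lbl l1 = lbl l2 \<longrightarrow> l1 = l2")
    case True
    then show ?thesis using less(2,3) by blast
  next
    case False
    then obtain l1 l2 where l: "l1 \<in> set z" "l2 \<in> set z" "lbl l1 = lbl l2" "l1 \<noteq> l2" by blast
    obtain z1 r where zr: "z = z1 @ l1 # r" using split_list[OF l(1)] by blast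
    have "l2 \<in> set z1 \<or> l2 \<in> set r" using l zr by auto
    then show ?thesis
    proof
      assume "l2 \<in> set r"
      then obtain z2 z3 where r: "r = z2 @ l2 # z3" using split_list by metis
      have "w = (u @ X # z1) @ l1 # z2 @ l2 # (z3 @ Y # x)" using less(2) zr r by simp
      moreover have "length z2 < length z" using zr r by simp
      ultimately show ?thesis using less(1) l(3) by blast
    next
      assume "l2 \<in> set z1"
      then obtain z2 z3 where r: "z1 = z2 @ l2 # z3" using split_list by metis
      have "w = (u @ X # z2) @ l2 # z3 @ l1 # (r @ Y # x)" using less(2) zr r by simp
      moreover have "length z3 < length z" using zr r by simp
      ultimately show ?thesis using less(1) l(3) by metis
    qed
  qed
qed


theorem mainTheorem4:
  assumes "gauss_word w"
  shows "wd_step\<^sup>*\<^sup>* w []"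
  using assms
proof (induction "length w" arbitrary: w rule: less_induct)
  case less
  note gw = less(2)
  show ?case
  proof (cases w)
    case Nil
    then show ?thesis by simp
  next
    case (Cons X0 rest)
    obtain c0 h0 \<sigma>0 where X0: "X0 = Ltr c0 h0 \<sigma>0" by (metis letter.collapse)
    have "Ltr c0 (\<not>h0) \<sigma>0 \<in> set w" using gw_partner[OF gw, of c0 h0 \<sigma>0] Cons X0 by simp
    then have "Ltr c0 (\<not>h0) \<sigma>0 \<in> set rest" using Cons X0 by auto
    then obtain z0 x0 where "rest = z0 @ Ltr c0 (\<not>h0) \<sigma>0 # x0" using split_list by metis
    then have "w = [] @ X0 # z0 @ Ltr c0 (\<not>h0) \<sigma>0 # x0" using Cons by simp
    moreover have "lbl X0 = lbl (Ltr c0 (\<not>h0) \<sigma>0)" using X0 by simp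
    ultimately have "\<exists>u X z Y x. w = u @ X # z @ Y # x \<and> lbl X = lbl Y \<and> (\<forall>l1\<in>set z. \<forall>l2\<in>set z. lbl l1 = lbl l2 \<longrightarrow> l1 = l2)"
      by (rule min_dec)
    then obtain u X z Y x where
      w: "w = u @ X # z @ Y # x" and XY: "lbl X = lbl Y" and
      inj: "\<forall>l1\<in>set z. \<forall>l2\<in>set z. lbl l1 = lbl l2 \<longrightarrow> l1 = l2"
      by blast
    define c where "c = lbl X"
    have lY: "lbl Y = c" using XY c_def by simp
    obtain h \<sigma> where X: "X = Ltr c h \<sigma>" and Y: "Y = Ltr c (\<not>h) \<sigma>"
      using gw_pair[OF gw[unfolded w] c_def[symmetric] lY] by blast
    have oth: "\<forall>l \<in> set u \<union> set z \<union> set x. lbl l \<noteq> c"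
      using gw_others[OF gw[unfolded w] refl] X Y by simp
    define L where "L = lbl ` {l \<in> set z. \<not> ovr l} \<union> (if h then {} else {c})"
    have finL: "finite L" unfolding L_def by simp
    define F where "F = flipset L"
    define \<sigma>' where "\<sigma>' = (if h then \<sigma> else \<not>\<sigma>)"
    have cL: "c \<in> L \<longleftrightarrow> \<not>h" unfolding L_def using oth by auto
    have FX: "F X = Ltr c True \<sigma>'" using cL unfolding F_def X \<sigma>'_def by (auto simp: flipset_def)
    have FY: "F Y = Ltr c False \<sigma>'" using cL unfolding F_def Y \<sigma>'_def by (auto simp: flipset_def)
    have zover: "\<forall>l\<in>set (map F z). ovr l"
    proof
      fix l' assume "l' \<in> set (map F z)"
      then obtain l where l: "l \<in> set z" "l' = F l" by auto
      show "ovr l'"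
      proof (cases "ovr l")
        case True
        have "lbl l \<notin> L"
        proof
          assume "lbl l \<in> L"
          then have "lbl l \<in> lbl ` {l \<in> set z. \<not> ovr l} \<or> lbl l = c"
            unfolding L_def by (auto split: if_splits)
          then show False using inj l True oth by force
        qed
        then show ?thesis using l True unfolding F_def flipset_def by simp
      next
        case False
        then have "lbl l \<in> L" using l unfolding L_def by auto
        then show ?thesis using l False unfolding F_def flipset_def by simp
      qed
    qed
    have s1: "wd_step\<^sup>*\<^sup>* w (map F w)" unfolding F_def by (rule flip_set[OF finL gw])
    have w1: "map F w = map F u @ Ltr c True \<sigma>' # map F z @ Ltr c False \<sigma>' # map F x"
      using w FX FY by simp
    have gw1: "gauss_word (map F u @ Ltr c True \<sigma>' # map F z @ Ltr c False \<sigma>' # map F x)"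
      using gw_flip[OF gw] w1 F_def by metis
    have s2: "wd_step\<^sup>*\<^sup>* (map F u @ Ltr c True \<sigma>' # map F z @ Ltr c False \<sigma>' # map F x)
                 (map F u @ map F z @ Ltr c True \<sigma>' # Ltr c False \<sigma>' # map F x)"
      using oc_slide[OF gw1 _ zover] by simp
    have gw2: "gauss_word (map F u @ map F z @ Ltr c True \<sigma>' # Ltr c False \<sigma>' # map F x)"
      using wd_gw[OF s2 gw1] .
    define w3 where "w3 = map F u @ map F z @ map F x"
    have oth3: "\<forall>l\<in>set w3. lbl l \<noteq> c" using oth unfolding w3_def F_def by auto
    have set3: "set w3 = set (map F u @ map F z @ Ltr c True \<sigma>' # Ltr c False \<sigma>' # map F x) - {l. lbl l = c}"
      using oth3 unfolding w3_def by auto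
    have gw3: "gauss_word w3"
    proof -
      have "distinct w3" using gw2 unfolding w3_def gauss_word_def by auto
      moreover have "GS (set w3)" unfolding set3 by (rule GS_remove) (use gw2 gw_char in auto)
      ultimately show ?thesis by (simp add: gw_char)
    qed
    have r1: "r1_move w3 (map F u @ map F z @ Ltr c True \<sigma>' # Ltr c False \<sigma>' # map F x)"
      unfolding r1_move_def
      apply (rule exI[of _ c], rule exI[of _ \<sigma>'])
      apply (intro conjI)
      using oth3 apply (auto simp: labels_def)[1]
      apply (rule disjI1)
      unfolding replace_segs_def
      apply (rule conjI, simp)
      apply (rule exI[of _ "[map F u @ map F z, map F x]"], rule exI[of _ "[0]"])
      by (simp add: w3_def lessThan_Suc)
    have s3: "wd_step (map F u @ map F z @ Ltr c True \<sigma>' # Ltr c False \<sigma>' # map F x) w3"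
      unfolding wd_step_def welded_step_def using r1 gw2 gw3 by simp
    have "length w3 < length w" unfolding w3_def w by simp
    then have s4: "wd_step\<^sup>*\<^sup>* w3 []" using less(1) gw3 by blast
    have "wd_step\<^sup>*\<^sup>* w (map F u @ map F z @ Ltr c True \<sigma>' # Ltr c False \<sigma>' # map F x)"
      using s1 s2 w1 by simp
    then show ?thesis using s3 s4 by (meson converse_rtranclp_into_rtranclp rtranclp_trans)
  qed
qed

end
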